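(* Let $\gamma\in\mathrm{SL}_2(\mathbb{Z})$ and $k\ge1$ with $\det(\mathrm{Id}_2-\gamma^k)\neq0$, so that $\operatorname{coker}(\mathrm{Id}_2-\gamma^k)=\mathbb{Z}^2/(\mathrm{Id}_2-\gamma^k)\mathbb{Z}^2$ is finite, and let $\gamma$ act on it by multiplication. Then for $1\le p<k$, the number of fixed points of $\gamma^p$ on $\operatorname{coker}(\mathrm{Id}_2-\gamma^k)$ equals $|\det(\mathrm{Id}_2-\gamma^d)|$, where $d=\gcd(k,p)$ if $\gamma$ has infinite order, and $d=\gcd(k,p,m)$ if $\gamma$ has finite order $m$. *)

theory Defs
  imports "HOL-Analysis.Analysis"
begin

primrec mat_pow :: "int^2^2 \<Rightarrow> nat \<Rightarrow> int^2^2" where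
  "mat_pow A 0 = mat 1"
| "mat_pow A (Suc n) = A ** mat_pow A n"

definition coker_rel :: "int^2^2 \<Rightarrow> ((int^2) \<times> (int^2)) set" where
  "coker_rel A = {(v, w). v - w \<in> range (\<lambda>x. A *v x)}"

definition coker :: "int^2^2 \<Rightarrow> (int^2) set set" where
  "coker A = UNIV // coker_rel A"

definition coker_fixed :: "int^2^2 \<Rightarrow> int^2^2 \<Rightarrow> (int^2) set set" where
  "coker_fixed A G = {C \<in> coker A. \<forall>v\<in>C. (G *v v, v) \<in> coker_rel A}"

definition has_finite_order :: "int^2^2 \<Rightarrow> bool" where
  "has_finite_order g \<longleftrightarrow> (\<exists>n>0. mat_pow g n = mat 1)"

definition mat_order :: "int^2^2 \<Rightarrow> nat" where
  "mat_order g = (LEAST n. n > 0 \<and> mat_pow g n = mat 1)"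

end

theory Submission
  imports Defs
begin


lemma matc: "(mat a :: int^2^2)$i$j = (if i = j then a else 0)"
  by (simp add: mat_def)

lemma matmulc: "(mat b ** (g::int^2^2))$i$j = b * g$i$j"
  by (simp add: matrix_mul_lid matrix_matrix_mult_def mat_def if_distrib[of "\<lambda>x. x * _"] sum.delta cong: if_cong)

lemmas comp22 = matc matmulc

lemma mm22: "((A::int^2^2) ** B)$i$j = A$i$1 * B$1$j + A$i$2 * B$2$j"
  by (simp add: matrix_matrix_mult_def sum_2)

lemma mv22: "((A::int^2^2) *v x)$i = A$i$1 * x$1 + A$i$2 * x$2"
  by (simp add: matrix_vector_mult_def sum_2)

lemma inj_vec:
  fixes D :: "int^2^2"
  assumes "det D \<noteq> 0" "D *v x = D *v y" shows "x = y"
proof -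
  have e1: "D$1$1 * (x$1 - y$1) + D$1$2 * (x$2 - y$2) = 0"
    using arg_cong[OF assms(2), of "\<lambda>v. v$1"] by (simp add: mv22 algebra_simps)
  have e2: "D$2$1 * (x$1 - y$1) + D$2$2 * (x$2 - y$2) = 0"
    using arg_cong[OF assms(2), of "\<lambda>v. v$2"] by (simp add: mv22 algebra_simps)
  have "det D * (x$1 - y$1) = D$2$2 * (D$1$1 * (x$1 - y$1) + D$1$2 * (x$2 - y$2))
        - D$1$2 * (D$2$1 * (x$1 - y$1) + D$2$2 * (x$2 - y$2))"
    by (simp add: det_2 algebra_simps)
  hence 1: "x$1 = y$1" using e1 e2 assms(1) by simp
  have "det D * (x$2 - y$2) = D$1$1 * (D$2$1 * (x$1 - y$1) + D$2$2 * (x$2 - y$2))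
        - D$2$1 * (D$1$1 * (x$1 - y$1) + D$1$2 * (x$2 - y$2))"
    by (simp add: det_2 algebra_simps)
  hence 2: "x$2 = y$2" using e1 e2 assms(1) by simp
  show ?thesis using 1 2 by (simp add: vec_eq_iff forall_2)
qed

definition inpol :: "int^2^2 \<Rightarrow> int^2^2 \<Rightarrow> bool" where
  "inpol g M \<longleftrightarrow> (\<exists>a b. M = mat a + mat b ** g)"

lemma inpol_mult:
  assumes "inpol g M" "inpol g N" shows "inpol g (M ** N)"
proof -
  obtain a b c d where M: "M = mat a + mat b ** g" and N: "N = mat c + mat d ** g"
    using assms unfolding inpol_def by blast
  have "M ** N = mat (a*c - b*d*det g) + mat (a*d + b*c + b*d*(g$1$1 + g$2$2)) ** g"
    unfolding M N by (simp add: vec_eq_iff forall_2 mm22 comp22 det_2 algebra_simps)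
  thus ?thesis unfolding inpol_def by blast
qed

lemma inpol_comm:
  assumes "inpol g M" "inpol g N" shows "M ** N = N ** M"
proof -
  obtain a b c d where M: "M = mat a + mat b ** g" and N: "N = mat c + mat d ** g"
    using assms unfolding inpol_def by blast
  show ?thesis
    unfolding M N by (simp add: vec_eq_iff forall_2 mm22 comp22 algebra_simps)
qed

lemma inpol_add: "inpol g M \<Longrightarrow> inpol g N \<Longrightarrow> inpol g (M + N)"
  unfolding inpol_def
  apply (elim exE)
  subgoal for a b c d
    apply (rule exI[of _ "a+b"], rule exI[of _ "c+d"])
    by (simp add: vec_eq_iff forall_2 comp22 algebra_simps)
  done

lemma inpol_uminus: "inpol g M \<Longrightarrow> inpol g (- M)"
  unfolding inpol_def
  apply (elim exE)
  subgoal for a b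
    apply (rule exI[of _ "-a"], rule exI[of _ "-b"])
    by (simp add: vec_eq_iff forall_2 comp22 algebra_simps)
  done

lemma inpol_diff: "inpol g M \<Longrightarrow> inpol g N \<Longrightarrow> inpol g (M - N)"
  using inpol_add[OF _ inpol_uminus, of g M N] by simp

lemma inpol_mat: "inpol g (mat c)"
  unfolding inpol_def by (rule exI[of _ c], rule exI[of _ 0]) (simp add: vec_eq_iff forall_2 comp22)

lemma inpol_zero: "inpol g 0"
proof -
  have "mat 0 = (0::int^2^2)" by (simp add: vec_eq_iff matc)
  thus ?thesis using inpol_mat[of g 0] by simp
qed

lemma inpol_pow: "inpol g (mat_pow g n)"
proof (induction n)
  case 0 then show ?case by (simp add: inpol_mat)
next
  case (Suc n)
  have "inpol g g" unfolding inpol_def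
    by (rule exI[of _ 0], rule exI[of _ 1]) (simp add: vec_eq_iff forall_2 comp22)
  then show ?case using Suc inpol_mult by simp
qed

lemma inpol_sum: "inpol g (\<Sum>i<n. f i)" if "\<And>i. inpol g (f i)" for f :: "nat \<Rightarrow> int^2^2"
  using that by (induction n) (simp_all add: inpol_zero inpol_add)


lemma ml_add: "(A::int^2^2) ** (B + C) = A ** B + A ** C"
  by (simp add: vec_eq_iff forall_2 mm22 algebra_simps)
lemma mr_add: "((A::int^2^2) + B) ** C = A ** C + B ** C"
  by (simp add: vec_eq_iff forall_2 mm22 algebra_simps)
lemma ml_diff: "(A::int^2^2) ** (B - C) = A ** B - A ** C"
  by (simp add: vec_eq_iff forall_2 mm22 algebra_simps)
lemma mr_diff: "((A::int^2^2) - B) ** C = A ** C - B ** C"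
  by (simp add: vec_eq_iff forall_2 mm22 algebra_simps)
lemma ml_neg: "(A::int^2^2) ** (- B) = - (A ** B)"
  by (simp add: vec_eq_iff forall_2 mm22 algebra_simps)
lemma mr_neg: "(- (A::int^2^2)) ** B = - (A ** B)"
  by (simp add: vec_eq_iff forall_2 mm22 algebra_simps)
lemma ml_zero: "(A::int^2^2) ** 0 = 0"
  by (simp add: vec_eq_iff forall_2 mm22)

lemma mat_pow_add: "mat_pow g (a + b) = mat_pow g a ** mat_pow g b"
  by (induction a) (simp_all add: matrix_mul_assoc)

lemma geom:
  "mat 1 - mat_pow g (d * m) = (mat 1 - mat_pow g d) ** (\<Sum>i<m. mat_pow g (d * i))"
proof (induction m)
  case 0 then show ?case by (simp add: ml_zero)
next
  case (Suc m)
  have e: "mat_pow g (d * Suc m) = mat_pow g d ** mat_pow g (d * m)"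
    using mat_pow_add[of g d "d*m"] by (simp add: add.commute)
  have "(mat 1 - mat_pow g d) ** (\<Sum>i<Suc m. mat_pow g (d * i))
     = (mat 1 - mat_pow g d) ** (\<Sum>i<m. mat_pow g (d * i)) + (mat 1 - mat_pow g d) ** mat_pow g (d * m)"
    by (simp add: ml_add)
  also have "\<dots> = (mat 1 - mat_pow g (d * m)) + (mat_pow g (d * m) - mat_pow g d ** mat_pow g (d * m))"
    by (subst Suc.IH) (simp add: mr_diff)
  also have "\<dots> = mat 1 - mat_pow g (d * Suc m)"
    by (simp only: e) simp
  finally show ?case by simp
qed

lemma geom_dvd:
  assumes "d dvd n"
  shows "\<exists>S. inpol g S \<and> mat 1 - mat_pow g n = (mat 1 - mat_pow g d) ** S"
proof -
  obtain m where "n = d * m" using assms by blast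
  thus ?thesis using geom[of g d m] inpol_sum[of g "\<lambda>i. mat_pow g (d*i)" m] inpol_pow by blast
qed

lemma bez:
  "\<exists>X Y. inpol g X \<and> inpol g Y \<and>
     mat 1 - mat_pow g (gcd a b) = (mat 1 - mat_pow g a) ** X + (mat 1 - mat_pow g b) ** Y"
proof (cases "a = 0")
  case True
  then show ?thesis
    by (intro exI[of _ 0] exI[of _ "mat 1"]) (simp add: inpol_zero inpol_mat ml_zero)
next
  case False
  then obtain x y where xy: "a * x = b * y + gcd a b" using bezout_nat by blast
  define c where "c = gcd a b"
  obtain Sa where Sa: "inpol g Sa" "mat 1 - mat_pow g (a*x) = (mat 1 - mat_pow g a) ** Sa"
    using geom_dvd[of a "a*x" g] by auto
  obtain Sb where Sb: "inpol g Sb" "mat 1 - mat_pow g (b*y) = (mat 1 - mat_pow g b) ** Sb"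
    using geom_dvd[of b "b*y" g] by auto
  have pa: "mat_pow g (a*x) = mat_pow g c ** mat_pow g (b*y)"
    using mat_pow_add[of g c "b*y"] xy by (simp add: c_def add.commute)
  have ip: "inpol g (mat 1 - mat_pow g b)"
    using inpol_diff[OF inpol_mat inpol_pow] by blast
  have cm: "mat_pow g c ** (mat 1 - mat_pow g b) = (mat 1 - mat_pow g b) ** mat_pow g c"
    using inpol_comm[OF inpol_pow ip] by blast
  have "mat 1 - mat_pow g c = (mat 1 - mat_pow g (a*x)) - mat_pow g c ** (mat 1 - mat_pow g (b*y))"
    by (simp add: pa ml_diff)
  also have "\<dots> = (mat 1 - mat_pow g a) ** Sa + (mat 1 - mat_pow g b) ** (- (mat_pow g c ** Sb))"
    by (simp add: Sa Sb matrix_mul_assoc cm ml_neg)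
  finally show ?thesis
    using Sa Sb inpol_uminus[OF inpol_mult[OF inpol_pow Sb(1)]] unfolding c_def by blast
qed




lemma equiv_coker: "equiv UNIV (coker_rel N)"
proof (rule equivI)
  show "refl (coker_rel N)" unfolding refl_on_def coker_rel_def
    by (auto intro: image_eqI[of 0 _ 0])
  show "sym (coker_rel N)" unfolding sym_def coker_rel_def
  proof (clarsimp)
    fix x y z assume "x - y = N *v z"
    hence "y - x = N *v (- z)" by (simp add: vec_eq_iff mv22) (smt (verit))
    thus "y - x \<in> range ((*v) N)" by blast
  qed
  show "trans (coker_rel N)" unfolding trans_def coker_rel_def
  proof (clarsimp)
    fix x y z u v assume "x - y = N *v u" "y - z = N *v v"
    hence "x - z = N *v (u + v)" by (simp add: vec_eq_iff mv22 algebra_simps)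
    thus "x - z \<in> range ((*v) N)" by blast
  qed
qed auto

definition mkv :: "int \<Rightarrow> int \<Rightarrow> int^2" where
  "mkv x y = (\<chi> i. if i = 1 then x else y)"

lemma mkv1 [simp]: "mkv x y $ 1 = x" and mkv2 [simp]: "mkv x y $ 2 = y"
  by (simp_all add: mkv_def)

lemma small_mult_zero:
  fixes a z r s :: int
  assumes "a > 0" "0 \<le> r" "r < a" "0 \<le> s" "s < a" "r - s = a * z"
  shows "z = 0"
proof (rule ccontr)
  assume "z \<noteq> 0"
  hence "z \<ge> 1 \<or> z \<le> -1" by linarith
  then show False
  proof
    assume "z \<ge> 1" hence "a * z \<ge> a * 1" using assms(1) by (intro mult_left_mono) auto
    thus False using assms by linarith
  next
    assume "z \<le> -1" hence "a * z \<le> a * (-1)" using assms(1) by (intro mult_left_mono) auto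
    thus False using assms by linarith
  qed
qed

lemma card_tri:
  fixes T :: "int^2^2"
  assumes "T$1$2 = 0" "T$1$1 > 0" "T$2$2 > 0"
  shows "int (card (coker T)) = T$1$1 * T$2$2"
proof -
  define a where "a = T$1$1"
  define b where "b = T$2$1"
  define c where "c = T$2$2"
  have a: "a > 0" and c: "c > 0" using assms by (simp_all add: a_def c_def)
  have Tv: "T *v z = mkv (a * z$1) (b * z$1 + c * z$2)" for z
    by (simp add: vec_eq_iff forall_2 mv22 assms a_def b_def c_def)
  let ?R = "coker_rel T"
  define f where "f = (\<lambda>(i, j). ?R``{mkv i j})"
  have bij: "bij_betw f ({0..<a} \<times> {0..<c}) (coker T)"
  proof (rule bij_betwI')
    fix x y assume x: "x \<in> {0..<a} \<times> {0..<c}" and y: "y \<in> {0..<a} \<times> {0..<c}"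
    obtain i j where xe: "x = (i, j)" by force
    obtain i' j' where ye: "y = (i', j')" by force
    show "(f x = f y) = (x = y)"
    proof
      assume "f x = f y"
      hence "(mkv i j, mkv i' j') \<in> ?R"
        using eq_equiv_class_iff[OF equiv_coker] by (simp add: f_def xe ye)
      then obtain z where z: "mkv i j - mkv i' j' = T *v z" unfolding coker_rel_def by auto
      have z1: "i - i' = a * z$1" using arg_cong[OF z, of "\<lambda>v. v$1"] by (simp add: Tv)
      have z2: "j - j' = b * z$1 + c * z$2" using arg_cong[OF z, of "\<lambda>v. v$2"] by (simp add: Tv)
      have "z$1 = 0" using small_mult_zero[OF a _ _ _ _ z1] x y xe ye by auto
      hence "j - j' = c * z$2" using z2 by simp
      hence "z$2 = 0" using small_mult_zero[OF c, of j j'] x y xe ye by auto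
      thus "x = y" using z1 z2 \<open>z$1 = 0\<close> xe ye by simp
    qed simp
  next
    fix x assume "x \<in> {0..<a} \<times> {0..<c}"
    thus "f x \<in> coker T" unfolding coker_def f_def by (auto intro: quotientI)
  next
    fix C assume "C \<in> coker T"
    then obtain v where C: "C = ?R``{v}" unfolding coker_def by (auto elim: quotientE)
    define x where "x = v$1 div a"
    define y where "y = (v$2 - b * x) div c"
    define r1 where "r1 = v$1 mod a"
    define r2 where "r2 = (v$2 - b * x) mod c"
    have "v - mkv r1 r2 = T *v mkv x y"
      unfolding Tv using a c
      by (simp add: vec_eq_iff forall_2 x_def y_def r1_def r2_def minus_mod_eq_mult_div[symmetric] algebra_simps)
    hence "(v, mkv r1 r2) \<in> ?R" unfolding coker_rel_def by auto
    hence "C = f (r1, r2)" unfolding C f_def using eq_equiv_class_iff[OF equiv_coker] by auto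
    moreover have "(r1, r2) \<in> {0..<a} \<times> {0..<c}" using a c by (simp add: r1_def r2_def)
    ultimately show "\<exists>x\<in>{0..<a} \<times> {0..<c}. C = f x" by blast
  qed
  have "card (coker T) = card ({0..<a} \<times> {0..<c})" using bij_betw_same_card[OF bij] by simp
  also have "\<dots> = nat a * nat c" by (simp add: card_cartesian_product)
  finally show ?thesis using a c by (simp add: a_def c_def)
qed


lemma coker_range: "range ((*v) N) = range ((*v) T) \<Longrightarrow> coker N = coker T"
  unfolding coker_def coker_rel_def by simp

lemma card_det:
  fixes N :: "int^2^2"
  assumes dN: "det N \<noteq> 0"
  shows "int (card (coker N)) = \<bar>det N\<bar>"
proof -
  define n11 where "n11 = N$1$1"
  define n12 where "n12 = N$1$2"
  define n21 where "n21 = N$2$1"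
  define n22 where "n22 = N$2$2"
  have det: "det N = n11 * n22 - n12 * n21" by (simp add: det_2 n11_def n12_def n21_def n22_def)
  define g0 where "g0 = gcd n11 n12"
  have g0: "g0 \<noteq> 0" using dN det by (auto simp: g0_def)
  hence g0p: "g0 > 0" by (simp add: g0_def)
  obtain q11 where q11: "n11 = g0 * q11" unfolding g0_def by (meson gcd_dvd1 dvdE)
  obtain q12 where q12: "n12 = g0 * q12" unfolding g0_def by (meson gcd_dvd2 dvdE)
  obtain s t where st: "s * n11 + t * n12 = g0" unfolding g0_def using bezout_int by blast
  have st1: "s * q11 + t * q12 = 1"
  proof -
    have "g0 * (s * q11 + t * q12) = g0 * 1" using st q11 q12 by (simp add: algebra_simps)
    thus ?thesis using g0 mult_left_cancel by blast
  qed
  define \<sigma> where "\<sigma> = sgn (det N)"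
  have ss: "\<sigma> * \<sigma> = 1" using dN by (simp add: \<sigma>_def sgn_if)
  have sd: "\<sigma> * det N = \<bar>det N\<bar>" by (simp add: \<sigma>_def abs_sgn)
  define U :: "int^2^2" where
    "U = (\<chi> i j. if i = 1 then (if j = 1 then s else - \<sigma> * q12) else (if j = 1 then t else \<sigma> * q11))"
  define V :: "int^2^2" where
    "V = (\<chi> i j. if i = 1 then (if j = 1 then q11 else q12) else (if j = 1 then - \<sigma> * t else \<sigma> * s))"
  have UV: "U ** V = mat 1"
  proof -
    have "s * q11 + \<sigma> * \<sigma> * q12 * t = 1" "\<sigma> * \<sigma> * q11 * s + q12 * t = 1"
      using st1 ss by (simp_all add: algebra_simps)
    thus ?thesis
      by (simp add: vec_eq_iff forall_2 mm22 matc U_def V_def algebra_simps) (simp add: ss)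
  qed
  define T where "T = N ** U"
  have rng: "range ((*v) N) = range ((*v) T)"
  proof
    show "range ((*v) T) \<subseteq> range ((*v) N)"
      unfolding T_def by (auto simp: matrix_vector_mul_assoc[symmetric])
    show "range ((*v) N) \<subseteq> range ((*v) T)"
    proof
      fix w assume "w \<in> range ((*v) N)"
      then obtain y where w: "w = N *v y" by blast
      have "w = T *v (V *v y)" unfolding w T_def
        by (simp add: matrix_vector_mul_assoc matrix_mul_assoc[symmetric] UV)
      thus "w \<in> range ((*v) T)" by blast
    qed
  qed
  have T12: "T$1$2 = 0" unfolding T_def
    by (simp add: mm22 U_def n11_def[symmetric] n12_def[symmetric] q11 q12 algebra_simps)
  have T11: "T$1$1 = g0" unfolding T_def
    by (simp add: mm22 U_def n11_def[symmetric] n12_def[symmetric] st[symmetric] algebra_simps)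
  have "g0 * T$2$2 = \<sigma> * det N" unfolding T_def det
    by (simp add: mm22 U_def n21_def[symmetric] n22_def[symmetric] q11 q12 algebra_simps)
  hence T22: "g0 * T$2$2 = \<bar>det N\<bar>" using sd by simp
  have "T$2$2 > 0"
  proof -
    have "g0 * T$2$2 > 0" using T22 dN by simp
    thus ?thesis using g0p by (simp add: zero_less_mult_iff)
  qed
  then have "int (card (coker T)) = \<bar>det N\<bar>"
    using card_tri[OF T12] T11 g0p T22 by simp
  thus ?thesis using coker_range[OF rng] by simp
qed




lemma mr_zero: "0 ** (A::int^2^2) = 0"
  by (simp add: vec_eq_iff forall_2 mm22)

lemma card_range_eq:
  assumes "\<And>x y. f x = f y \<longleftrightarrow> h x = h y"
  shows "card (range f) = card (range h)"
proof -
  define \<phi> where "\<phi> = (\<lambda>b. f (SOME x. h x = b))"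
  have 1: "\<phi> (h x) = f x" for x
  proof -
    have "h (SOME y. h y = h x) = h x" by (rule someI) simp
    thus ?thesis unfolding \<phi>_def using assms by blast
  qed
  have "range f = \<phi> ` range h" using 1 by (auto simp: image_iff)
  moreover have "inj_on \<phi> (range h)"
    by (auto simp: inj_on_def 1 assms)
  ultimately show ?thesis by (simp add: card_image)
qed

lemma coker_range_eq: "coker N = range (\<lambda>x. coker_rel N `` {x})"
  by (auto simp: coker_def quotient_def)

lemma main_count:
  fixes A B D A' B' X Y P :: "int^2^2"
  assumes dA: "det A \<noteq> 0"
    and AD: "A = D ** A'" and BD: "B = D ** B'" and DAB: "D = A ** X + B ** Y"
    and B: "B = mat 1 - P"
    and pA': "inpol g A'" and pB': "inpol g B'" and pX: "inpol g X" and pY: "inpol g Y" and pD: "inpol g D"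
  shows "int (card (coker_fixed A P)) = \<bar>det D\<bar>"
proof -
  have dD: "det D \<noteq> 0" and dA': "det A' \<noteq> 0" using dA AD by (auto simp: det_mul)
  have cA'D: "A' ** D = D ** A'" using inpol_comm[OF pA' pD] .
  have cA'B': "A' ** B' = B' ** A'" using inpol_comm[OF pA' pB'] .
  have cB'Y: "B' ** Y = Y ** B'" using inpol_comm[OF pB' pY] .
  have cA'Y: "A' ** Y = Y ** A'" using inpol_comm[OF pA' pY] .
  have bezv: "v = A' *v (X *v v) + B' *v (Y *v v)" for v
  proof (rule inj_vec[OF dD])
    have "D *v (A' *v (X *v v) + B' *v (Y *v v)) = (A ** X) *v v + (B ** Y) *v v"
      by (simp add: matrix_vector_right_distrib matrix_vector_mul_assoc AD BD matrix_mul_assoc)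
    also have "\<dots> = D *v v" by (simp add: DAB matrix_vector_mult_add_rdistrib)
    finally show "D *v v = D *v (A' *v (X *v v) + B' *v (Y *v v))" by simp
  qed
  let ?RA = "coker_rel A" and ?RD = "coker_rel D"
  have eqA: "equiv UNIV ?RA" and eqD: "equiv UNIV ?RD" by (rule equiv_coker)+
  have Fe: "coker_fixed A P = range (\<lambda>x. ?RA``{A' *v x})"
  proof
    show "coker_fixed A P \<subseteq> range (\<lambda>x. ?RA``{A' *v x})"
    proof
      fix C assume C: "C \<in> coker_fixed A P"
      then obtain v where Cv: "C = ?RA``{v}" unfolding coker_fixed_def coker_def by (auto elim: quotientE)
      have "v \<in> C" unfolding Cv using equiv_class_self[OF eqA] by simp
      hence "(P *v v, v) \<in> ?RA" using C unfolding coker_fixed_def by blast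
      then obtain z where z: "P *v v - v = A *v z" unfolding coker_rel_def by blast
      have "D *v (B' *v v) = D *v (A' *v (- z))"
      proof -
        have "D *v (B' *v v) = B *v v" by (simp add: BD matrix_vector_mul_assoc)
        also have "\<dots> = - (P *v v - v)" by (simp add: B matrix_vector_mult_diff_rdistrib)
        also have "\<dots> = A *v (- z)" by (simp add: z vec_eq_iff mv22)
        also have "\<dots> = D *v (A' *v (- z))" by (simp add: AD matrix_vector_mul_assoc)
        finally show ?thesis .
      qed
      hence Bv: "B' *v v = A' *v (- z)" by (rule inj_vec[OF dD])
      have "v = A' *v (X *v v) + Y *v (B' *v v)"
        using bezv[of v] by (simp add: matrix_vector_mul_assoc cB'Y)
      also have "\<dots> = A' *v (X *v v + Y *v (- z))"
        by (simp add: Bv matrix_vector_mul_assoc cA'Y matrix_vector_right_distrib)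
      finally have "C = ?RA``{A' *v (X *v v + Y *v (- z))}" using Cv by simp
      thus "C \<in> range (\<lambda>x. ?RA``{A' *v x})" by blast
    qed
    show "range (\<lambda>x. ?RA``{A' *v x}) \<subseteq> coker_fixed A P"
    proof
      fix C assume "C \<in> range (\<lambda>x. ?RA``{A' *v x})"
      then obtain x where C: "C = ?RA``{A' *v x}" by blast
      have "C \<in> coker A" unfolding C coker_def by (rule quotientI) simp
      moreover have "(P *v w, w) \<in> ?RA" if "w \<in> C" for w
      proof -
        from that obtain z where z: "A' *v x - w = A *v z" unfolding C coker_rel_def by auto
        define u where "u = x - D *v z"
        have wu: "w = A' *v u"
        proof -
          have "w = A' *v x - A *v z" using z by (simp add: vec_eq_iff mv22) (smt (verit))
          also have "\<dots> = A' *v u" unfolding u_def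
            by (simp add: matrix_vector_mult_diff_distrib matrix_vector_mul_assoc AD cA'D)
          finally show ?thesis .
        qed
        have "P *v w - w = - (B *v w)" by (simp add: B matrix_vector_mult_diff_rdistrib)
        also have "\<dots> = - ((D ** B' ** A') *v u)" by (simp add: wu BD matrix_vector_mul_assoc)
        also have "\<dots> = - (A *v (B' *v u))"
        proof -
          have "D ** B' ** A' = (D ** A') ** B'"
            by (metis matrix_mul_assoc cA'B')
          thus ?thesis by (simp add: AD matrix_vector_mul_assoc)
        qed
        also have "\<dots> = A *v (- (B' *v u))" by (simp add: vec_eq_iff mv22 algebra_simps)
        finally show ?thesis unfolding coker_rel_def by blast
      qed
      ultimately show "C \<in> coker_fixed A P" unfolding coker_fixed_def by blast
    qed
  qed
  have key: "?RA``{A' *v x} = ?RA``{A' *v y} \<longleftrightarrow> ?RD``{x} = ?RD``{y}" for x y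
  proof -
    have "(A' *v x, A' *v y) \<in> ?RA \<longleftrightarrow> (x, y) \<in> ?RD"
    proof
      assume "(A' *v x, A' *v y) \<in> ?RA"
      then obtain z where z: "A' *v x - A' *v y = A *v z" unfolding coker_rel_def by auto
      have "A' *v (x - y) = A' *v (D *v z)"
        using z by (simp add: matrix_vector_mult_diff_distrib matrix_vector_mul_assoc AD cA'D)
      hence "x - y = D *v z" by (rule inj_vec[OF dA'])
      thus "(x, y) \<in> ?RD" unfolding coker_rel_def by auto
    next
      assume "(x, y) \<in> ?RD"
      then obtain z where z: "x - y = D *v z" unfolding coker_rel_def by auto
      have "A' *v x - A' *v y = A' *v (x - y)" by (simp add: matrix_vector_mult_diff_distrib)
      also have "\<dots> = A *v z" by (simp add: z matrix_vector_mul_assoc AD cA'D)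
      finally show "(A' *v x, A' *v y) \<in> ?RA" unfolding coker_rel_def by auto
    qed
    thus ?thesis using eq_equiv_class_iff[OF eqA] eq_equiv_class_iff[OF eqD] by simp
  qed
  have "card (coker_fixed A P) = card (coker D)"
    unfolding Fe coker_range_eq[of D] by (rule card_range_eq) (rule key)
  thus ?thesis using card_det[OF dD] by simp
qed




theorem lemma3p8:
  fixes g :: "int^2^2" and k p :: nat
  assumes "det g = 1"
    and "k \<ge> 1"
    and "det (mat 1 - mat_pow g k) \<noteq> 0"
    and "1 \<le> p" and "p < k"
  shows "int (card (coker_fixed (mat 1 - mat_pow g k) (mat_pow g p)))
         = \<bar>det (mat 1 - mat_pow g
              (if has_finite_order g then gcd (gcd k p) (mat_order g) else gcd k p))\<bar>"
proof -
  define dd where "dd = (if has_finite_order g then gcd (gcd k p) (mat_order g) else gcd k p)"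
  define A where "A = mat 1 - mat_pow g k"
  define B where "B = mat 1 - mat_pow g p"
  define D where "D = mat 1 - mat_pow g dd"
  have dk: "dd dvd k" and dp: "dd dvd p" unfolding dd_def
    by (auto intro: dvd_trans[OF gcd_dvd1] dvd_trans[OF gcd_dvd2])
  obtain A' where A': "inpol g A'" "A = D ** A'"
    using geom_dvd[OF dk, of g] unfolding A_def D_def by blast
  obtain B' where B': "inpol g B'" "B = D ** B'"
    using geom_dvd[OF dp, of g] unfolding B_def D_def by blast
  obtain X2 Y2 where XY2: "inpol g X2" "inpol g Y2" "mat 1 - mat_pow g (gcd k p) = A ** X2 + B ** Y2"
    using bez[of g k p] unfolding A_def B_def by blast
  have "\<exists>X Y. inpol g X \<and> inpol g Y \<and> D = A ** X + B ** Y"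
  proof (cases "has_finite_order g")
    case False
    then show ?thesis using XY2 unfolding D_def dd_def by auto
  next
    case True
    define m where "m = mat_order g"
    have Pm: "mat_pow g m = mat 1"
    proof -
      obtain n where "n > 0 \<and> mat_pow g n = mat 1" using True unfolding has_finite_order_def by blast
      hence "m > 0 \<and> mat_pow g m = mat 1" unfolding m_def mat_order_def by (rule LeastI)
      thus ?thesis by simp
    qed
    obtain X1 Y1 where XY1: "inpol g X1" "inpol g Y1"
      "mat 1 - mat_pow g (gcd (gcd k p) m) = (mat 1 - mat_pow g (gcd k p)) ** X1 + (mat 1 - mat_pow g m) ** Y1"
      using bez[of g "gcd k p" m] by blast
    have "D = (A ** X2 + B ** Y2) ** X1"
      using XY1(3) XY2(3) True unfolding D_def dd_def m_def[symmetric] by (simp add: Pm mr_zero)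
    also have "\<dots> = A ** (X2 ** X1) + B ** (Y2 ** X1)" by (simp add: mr_add matrix_mul_assoc)
    finally show ?thesis using XY1 XY2 inpol_mult by blast
  qed
  then obtain X Y where XY: "inpol g X" "inpol g Y" "D = A ** X + B ** Y" by blast
  have pD: "inpol g D" unfolding D_def by (rule inpol_diff[OF inpol_mat inpol_pow])
  have "int (card (coker_fixed A (mat_pow g p))) = \<bar>det D\<bar>"
    by (rule main_count[OF _ A'(2) B'(2) XY(3) B_def A'(1) B'(1) XY(1) XY(2) pD])
       (use assms(3) A_def in simp)
  thus ?thesis unfolding A_def D_def dd_def .
qed


end
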